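(* Let $\epsilon>0$, $R\in\mathbb{R}$, and let $s_R\ge0$ and $m_R<\beta$ be constants such that every $\varphi\in\Theta$ with $L(\varphi)\ge R$ satisfies $|\varphi(0)|\le s_R$ and $\sup_x\varphi'(x+)\le m_R$. Suppose $\theta\in\Theta$ and $\tau\in\mathbb{R}_{\ge0}$ satisfy $DL(\theta,V_\tau)>\epsilon$ and $R\le L(\theta)$. Let $g:\mathbb{R}_{\ge0}\to[-\infty,\infty)$ be $g(t):=L(\theta+tV_\tau)-L(\theta)$. Then for $t$ in the set $\{t: g(t)\ge0\}$, the magnitude $|g''(t)|$ of the second derivative of $g$ is bounded above by a finite constant depending only on $s_R$ and $m_R$ (given the fixed density $f$ and data $x_1,\dots,x_n$).
   Context: Let $f$ be a probability density on $\mathbb{R}_{\ge0}$ satisfying the standing assumptions: (A1) $f$ is continuous and $f(x)>0$ for all $x>0$; (A2) there is $\beta\in\mathbb{R}$ such that for every $\lambda\in\mathbb{R}$, $\int_0^\infty e^{\lambda x}f(x)\,dx<\infty$ if and only if $\lambda<\beta$, and $\lim_{\lambda\to\beta^-}\int_0^\infty e^{\lambda x}f(x)\,dx=\infty$; (A3) for every $\lambda\in\mathbb{R}$, $\int_0^\infty e^{\lambda x}f(x)dx<\infty$ implies $\int_0^\infty x^2e^{\lambda x}f(x)dx<\infty$. Let $M$ be the measure on $\mathbb{R}_{\ge0}$ with density $f$. Fix data $x_1\le\dots\le x_n$ in $\mathbb{R}_{\ge0}$ with empirical distribution $\hat P=\frac1n\sum_{i=1}^n\delta_{x_i}$. $\Theta$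 is the set of convex non-decreasing functions $\theta:\mathbb{R}_{\ge0}\to\mathbb{R}$. For $\theta\in\Theta$, $L(\theta):=\int\theta\,d\hat P-\int e^{\theta}\,dM+1\in[-\infty,\infty)$. For $\theta\in\Theta$ and a function $v$, $DL(\theta,v):=\lim_{t\to0^+}\frac{L(\theta+tv)-L(\theta)}{t}$. For $\tau\ge0$, $V_\tau(x):=(x-\tau)^+$. *)

theory Defs
  imports "HOL-Analysis.Analysis"
begin

definition Mf :: "(real \<Rightarrow> real) \<Rightarrow> real measure" where
  "Mf f = density (restrict_space lborel {0..}) (\<lambda>x. ennreal (f x))"

text \<open>Theta: convex non-decreasing functions on the nonnegative reals
  (values outside [0,oo) are irrelevant).\<close>
definition Theta :: "(real \<Rightarrow> real) set" where
  "Theta = {\<theta>. convex_on {0..} \<theta> \<and> mono_on {0..} \<theta>}"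

definition Lfun :: "(real \<Rightarrow> real) \<Rightarrow> real list \<Rightarrow> (real \<Rightarrow> real) \<Rightarrow> ereal" where
  "Lfun f xs \<theta> =
     ereal ((\<Sum>x\<leftarrow>xs. \<theta> x) / real (length xs))
     - enn2ereal (\<integral>\<^sup>+ x. ennreal (exp (\<theta> x)) \<partial>(Mf f)) + 1"

definition has_DL :: "(real \<Rightarrow> real) \<Rightarrow> real list \<Rightarrow> (real \<Rightarrow> real) \<Rightarrow> (real \<Rightarrow> real) \<Rightarrow> ereal \<Rightarrow> bool" where
  "has_DL f xs \<theta> v D \<longleftrightarrow>
     ((\<lambda>t. (Lfun f xs (\<lambda>x. \<theta> x + t * v x) - Lfun f xs \<theta>) / ereal t) \<longlongrightarrow> D) (at_right 0)"

definition V :: "real \<Rightarrow> real \<Rightarrow> real" where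
  "V \<tau> x = max (x - \<tau>) 0"

definition right_deriv :: "(real \<Rightarrow> real) \<Rightarrow> real \<Rightarrow> real" where
  "right_deriv \<phi> x = Lim (at_right x) (\<lambda>y. (\<phi> y - \<phi> x) / (y - x))"

end

theory Submission
  imports Defs
begin


lemma exp_taylor2_bound:
  fixes z :: real
  shows "\<bar>exp z - 1 - z\<bar> \<le> z\<^sup>2 * exp \<bar>z\<bar>"
proof -
  obtain t where t: "\<bar>t\<bar> \<le> \<bar>z\<bar>" "exp z = (\<Sum>m<2. (z ^ m) / fact m) + (exp t / fact 2) * z ^ 2"
    using Maclaurin_exp_le[of z 2] by blast
  have e: "exp z - 1 - z = exp t / 2 * z\<^sup>2" using t(2) by (simp add: numeral_2_eq_2)
  have et: "exp t \<le> exp \<bar>z\<bar>" using t(1) by simp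
  have "\<bar>exp z - 1 - z\<bar> = exp t / 2 * z\<^sup>2" unfolding e by (intro abs_of_nonneg) simp
  also have "\<dots> \<le> exp \<bar>z\<bar> * z\<^sup>2" using et
    by (intro mult_right_mono) (auto simp: field_simps intro: order_trans[of _ "exp \<bar>z\<bar>"])
  finally show ?thesis by (simp add: mult.commute)
qed

lemma pointwise_taylor:
  fixes W u h \<eta> y :: real
  assumes y: "0 \<le> y" and h: "\<bar>h\<bar> \<le> \<eta>"
  shows "\<bar>W * exp ((u + h) * y) - W * exp (u * y) - h * (W * y * exp (u * y))\<bar>
           \<le> h\<^sup>2 * (\<bar>W\<bar> * y\<^sup>2 * exp ((u + \<eta>) * y))"
proof -
  have e: "exp ((u + h) * y) = exp (u * y) * exp (h * y)"
    by (simp add: distrib_right exp_add)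
  have e2: "exp ((u + \<eta>) * y) = exp (u * y) * exp (\<eta> * y)"
    by (simp add: distrib_right exp_add)
  have G: "W * exp ((u + h) * y) - W * exp (u * y) - h * (W * y * exp (u * y))
      = (\<bar>W\<bar> * exp (u * y)) * (sgn W * (exp (h * y) - 1 - h * y))"
  proof -
    have "(\<bar>W\<bar> * exp (u * y)) * (sgn W * (exp (h * y) - 1 - h * y))
        = (\<bar>W\<bar> * sgn W) * (exp (u * y) * (exp (h * y) - 1 - h * y))" by (simp only: mult_ac)
    also have "\<dots> = W * (exp (u * y) * (exp (h * y) - 1 - h * y))" by (simp add: abs_mult_sgn)
    finally show ?thesis unfolding e by (simp add: algebra_simps)
  qed
  have hy: "\<bar>h * y\<bar> \<le> \<eta> * y" using h y by (simp add: abs_mult mult_right_mono)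
  have T: "\<bar>sgn W * (exp (h * y) - 1 - h * y)\<bar> \<le> (h * y)\<^sup>2 * exp (\<eta> * y)"
  proof -
    have "\<bar>sgn W * (exp (h * y) - 1 - h * y)\<bar> \<le> \<bar>exp (h * y) - 1 - h * y\<bar>"
      by (simp add: abs_mult abs_sgn_eq)
    also have "\<dots> \<le> (h * y)\<^sup>2 * exp \<bar>h * y\<bar>" by (rule exp_taylor2_bound)
    also have "\<dots> \<le> (h * y)\<^sup>2 * exp (\<eta> * y)" using hy by (intro mult_left_mono) auto
    finally show ?thesis .
  qed
  have "\<bar>W * exp ((u + h) * y) - W * exp (u * y) - h * (W * y * exp (u * y))\<bar>
      = (\<bar>W\<bar> * exp (u * y)) * \<bar>sgn W * (exp (h * y) - 1 - h * y)\<bar>"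
    unfolding G by (simp add: abs_mult)
  also have "\<dots> \<le> (\<bar>W\<bar> * exp (u * y)) * ((h * y)\<^sup>2 * exp (\<eta> * y))"
    using T by (intro mult_left_mono) auto
  also have "\<dots> = h\<^sup>2 * (\<bar>W\<bar> * y\<^sup>2 * exp ((u + \<eta>) * y))"
    unfolding e2 by (simp add: power_mult_distrib mult_ac)
  finally show ?thesis .
qed
lemma deriv_from_quadratic:
  fixes F :: "real \<Rightarrow> real"
  assumes eta: "\<eta> > 0"
    and bnd: "\<And>h. h \<noteq> 0 \<Longrightarrow> \<bar>h\<bar> < \<eta> \<Longrightarrow> \<bar>F (u + h) - F u - h * D\<bar> \<le> K * h\<^sup>2"
  shows "(F has_real_derivative D) (at u)"
proof -
  have pt: "norm ((F (u + h) - F u) / h - D) \<le> K * \<bar>h\<bar>" if h: "h \<noteq> 0" "\<bar>h\<bar> < \<eta>" for h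
  proof -
    have "(F (u + h) - F u) / h - D = (F (u + h) - F u - h * D) / h" using h by (simp add: field_simps)
    then have "norm ((F (u + h) - F u) / h - D) = \<bar>F (u + h) - F u - h * D\<bar> / \<bar>h\<bar>" by simp
    also have "\<dots> \<le> K * h\<^sup>2 / \<bar>h\<bar>" using bnd[OF h] h by (intro divide_right_mono) auto
    also have "\<dots> = K * \<bar>h\<bar>"
      using h(1) by (cases "h > 0") (auto simp: power2_eq_square)
    finally show ?thesis .
  qed
  have ev: "\<forall>\<^sub>F h in at 0. norm ((F (u + h) - F u) / h - D) \<le> K * \<bar>h\<bar>"
    unfolding eventually_at using eta pt by (auto simp: dist_real_def intro!: exI[of _ \<eta>])
  have "((\<lambda>h. K * \<bar>h\<bar>) \<longlongrightarrow> 0) (at (0::real))"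
    by (rule tendsto_eq_intros refl | simp)+
  then have "((\<lambda>h. (F (u + h) - F u) / h - D) \<longlongrightarrow> 0) (at 0)"
    using Lim_null_comparison[OF ev] by blast
  then have "((\<lambda>h. (F (u + h) - F u) / h) \<longlongrightarrow> D) (at 0)"
    by (rule LIM_zero_cancel)
  then show ?thesis by (simp add: DERIV_def)
qed

lemma deriv_exp_integral:
  fixes M :: "'a measure" and w v :: "'a \<Rightarrow> real"
  assumes cu: "c < u" "u < d"
    and vnn: "\<And>x. x \<in> space M \<Longrightarrow> 0 \<le> v x"
    and int0: "\<And>r. c < r \<Longrightarrow> r < d \<Longrightarrow> integrable M (\<lambda>x. w x * exp (r * v x))"
    and int1: "\<And>r. c < r \<Longrightarrow> r < d \<Longrightarrow> integrable M (\<lambda>x. w x * v x * exp (r * v x))"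
    and int2: "\<And>r. c < r \<Longrightarrow> r < d \<Longrightarrow> integrable M (\<lambda>x. \<bar>w x\<bar> * (v x)\<^sup>2 * exp (r * v x))"
  shows "((\<lambda>r. \<integral>x. w x * exp (r * v x) \<partial>M) has_real_derivative
           (\<integral>x. w x * v x * exp (u * v x) \<partial>M)) (at u)"
proof -
  define \<eta> where "\<eta> = min (u - c) (d - u) / 2"
  have e1: "\<eta> \<le> (u - c) / 2" "\<eta> \<le> (d - u) / 2" by (simp_all add: \<eta>_def)
  have \<eta>0: "\<eta> > 0" using cu by (simp add: \<eta>_def)
  have \<eta>2: "c < u - \<eta>" using cu e1(1) by (simp add: field_simps)
  have \<eta>3: "u + \<eta> < d" using cu e1(2) by (simp add: field_simps)
  note \<eta> = \<eta>0 \<eta>2 \<eta>3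
  define K where "K = (\<integral>x. \<bar>w x\<bar> * (v x)\<^sup>2 * exp ((u + \<eta>) * v x) \<partial>M)"
  show ?thesis
  proof (rule deriv_from_quadratic[where K=K, OF \<eta>(1)])
    fix h :: real assume h: "h \<noteq> 0" "\<bar>h\<bar> < \<eta>"
    have hb: "-\<eta> < h" "h < \<eta>" using h(2) by (simp_all add: abs_less_iff)
    have ch: "c < u + h" "u + h < d" using hb \<eta>2 \<eta>3 by linarith+
    have i0: "integrable M (\<lambda>x. w x * exp ((u + h) * v x))" using int0[OF ch] .
    have i1: "integrable M (\<lambda>x. w x * exp (u * v x))" using int0 cu .
    have i2: "integrable M (\<lambda>x. w x * v x * exp (u * v x))" using int1 cu .
    have i3: "integrable M (\<lambda>x. \<bar>w x\<bar> * (v x)\<^sup>2 * exp ((u + \<eta>) * v x))" using int2[of "u + \<eta>"] \<eta>0 \<eta>3 cu by simp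
    define G where "G = (\<lambda>x. (w x * exp ((u + h) * v x) - w x * exp (u * v x)) - h * (w x * v x * exp (u * v x)))"
    have iG: "integrable M G" unfolding G_def
      by (intro Bochner_Integration.integrable_diff Bochner_Integration.integrable_mult_right i0 i1 i2)
    have eq: "(\<integral>x. w x * exp ((u + h) * v x) \<partial>M) - (\<integral>x. w x * exp (u * v x) \<partial>M)
        - h * (\<integral>x. w x * v x * exp (u * v x) \<partial>M) = (\<integral>x. G x \<partial>M)"
      unfolding G_def
      by (simp add: Bochner_Integration.integral_diff Bochner_Integration.integrable_diff
             Bochner_Integration.integrable_mult_right i0 i1 i2)
    have pw: "\<bar>G x\<bar> \<le> h\<^sup>2 * (\<bar>w x\<bar> * (v x)\<^sup>2 * exp ((u + \<eta>) * v x))" if x: "x \<in> space M" for x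
      unfolding G_def using vnn[OF x] h by (intro pointwise_taylor) auto
    have "\<bar>\<integral>x. G x \<partial>M\<bar> \<le> (\<integral>x. \<bar>G x\<bar> \<partial>M)"
      by (rule integral_abs_bound)
    also have "\<dots> \<le> (\<integral>x. h\<^sup>2 * (\<bar>w x\<bar> * (v x)\<^sup>2 * exp ((u + \<eta>) * v x)) \<partial>M)"
      by (rule integral_mono[OF integrable_abs[OF iG] integrable_mult_right[OF i3] pw])
    also have "\<dots> = K * h\<^sup>2" unfolding K_def
      by (rule trans[OF integral_mult_right_zero mult.commute])
    finally show "\<bar>(\<integral>x. w x * exp ((u + h) * v x) \<partial>M) - (\<integral>x. w x * exp (u * v x) \<partial>M)
        - h * (\<integral>x. w x * v x * exp (u * v x) \<partial>M)\<bar> \<le> K * h\<^sup>2" unfolding eq .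
  qed
qed


lemma chord_le_right_deriv:
  fixes \<phi> :: "real \<Rightarrow> real"
  assumes cv: "convex_on {0..} \<phi>" and y: "0 < y"
  shows "(\<phi> y - \<phi> 0) / y \<le> right_deriv \<phi> y"
proof -
  define q where "q = (\<lambda>z. (\<phi> z - \<phi> y) / (z - y))"
  define K where "K = (\<phi> y - \<phi> 0) / y"
  have flip: "(\<phi> y - \<phi> z) / (y - z) = q z" for z
    unfolding q_def by (metis minus_diff_eq minus_divide_divide)
  have mono: "q a \<le> q b" if ab: "y < a" "a \<le> b" for a b
  proof (cases "a = b")
    case False
    then have "a < b" using ab by simp
    have "(\<phi> y - \<phi> a) / (y - a) \<le> (\<phi> y - \<phi> b) / (y - b)"
      using convex_on_slope_le(1)[OF cv _ _ \<open>y < a\<close> \<open>a < b\<close>] y ab by auto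
    then show ?thesis by (simp add: flip)
  qed simp
  have bnd: "K \<le> q z" if z: "y < z" for z
  proof -
    have "(\<phi> 0 - \<phi> y) / (0 - y) \<le> (\<phi> 0 - \<phi> z) / (0 - z)"
      using convex_on_slope_le(1)[OF cv _ _ y z] y z by auto
    also have "\<dots> \<le> (\<phi> y - \<phi> z) / (y - z)"
      using convex_on_slope_le(2)[OF cv _ _ y z] y z by auto
    finally have "(\<phi> 0 - \<phi> y) / (0 - y) \<le> q z" by (simp only: flip)
    moreover have "(\<phi> 0 - \<phi> y) / (0 - y) = (\<phi> y - \<phi> 0) / (y - 0)"
      by (metis minus_diff_eq minus_divide_divide)
    ultimately show ?thesis unfolding K_def by simp
  qed
  have "(q \<longlongrightarrow> Inf (q ` ({y<..} \<inter> UNIV))) (at y within ({y<..} \<inter> UNIV))"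
    by (rule Lim_right_bound[where K = K]) (auto intro: mono bnd)
  then have lim: "(q \<longlongrightarrow> Inf (q ` {y<..})) (at_right y)" by simp
  have "right_deriv \<phi> y = Lim (at_right y) q" unfolding right_deriv_def q_def by simp
  also have "\<dots> = Inf (q ` {y<..})" by (rule tendsto_Lim[OF _ lim]) simp
  finally have rd: "right_deriv \<phi> y = Inf (q ` {y<..})" .
  have "K \<le> Inf (q ` {y<..})"
    by (rule cInf_greatest) (auto intro: bnd)
  then show ?thesis using rd unfolding K_def by simp
qed

lemma V_nonneg: "0 \<le> V \<tau> x" by (simp add: V_def)
lemma V_le: "0 \<le> \<tau> \<Longrightarrow> 0 \<le> x \<Longrightarrow> V \<tau> x \<le> x" by (simp add: V_def)
lemma V_zero: "0 \<le> \<tau> \<Longrightarrow> V \<tau> 0 = 0" by (simp add: V_def)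

lemma V_convex: "convex_on {0..} (V \<tau>)"
proof (rule convex_onI)
  fix t x y :: real assume t: "0 < t" "t < 1"
  have a: "(1 - t) * (x - \<tau>) \<le> (1 - t) * V \<tau> x" using t by (intro mult_left_mono) (auto simp: V_def)
  have b: "t * (y - \<tau>) \<le> t * V \<tau> y" using t by (intro mult_left_mono) (auto simp: V_def)
  have c: "0 \<le> (1 - t) * V \<tau> x + t * V \<tau> y" using t by (simp add: V_nonneg)
  have "(1 - t) *\<^sub>R x + t *\<^sub>R y - \<tau> = (1 - t) * (x - \<tau>) + t * (y - \<tau>)" by (simp add: algebra_simps)
  then show "V \<tau> ((1 - t) *\<^sub>R x + t *\<^sub>R y) \<le> (1 - t) * V \<tau> x + t * V \<tau> y"
    using a b c unfolding V_def[of \<tau> "(1 - t) *\<^sub>R x + t *\<^sub>R y"] by simp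
qed (simp add: convex_real_interval)

lemma V_mono: "mono_on {0..} (V \<tau>)"
  by (auto simp: mono_on_def V_def)

lemma Lfun_not_PInf: "Lfun f xs \<phi> \<noteq> \<infinity>"
  unfolding Lfun_def
  by (cases "enn2ereal (\<integral>\<^sup>+ x. ennreal (exp (\<phi> x)) \<partial>Mf f)") auto



theorem mainTheorem6:
  fixes f :: "real \<Rightarrow> real" and \<beta> :: real and xs :: "real list"
  assumes f_nonneg: "\<forall>x\<ge>0. f x \<ge> 0"
    and f_prob: "(\<integral>\<^sup>+ x. ennreal (f x) \<partial>(restrict_space lborel {0..})) = 1"
    and A1_cont: "continuous_on {0..} f"
    and A1_pos: "\<forall>x>0. f x > 0"
    and A2_fin: "\<forall>l. (\<integral>\<^sup>+ x. ennreal (exp (l * x)) \<partial>(Mf f)) < \<infinity> \<longleftrightarrow> l < \<beta>"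
    and A2_lim: "((\<lambda>l. \<integral>\<^sup>+ x. ennreal (exp (l * x)) \<partial>(Mf f)) \<longlongrightarrow> \<infinity>) (at_left \<beta>)"
    and A3: "\<forall>l. (\<integral>\<^sup>+ x. ennreal (exp (l * x)) \<partial>(Mf f)) < \<infinity> \<longrightarrow>
                 (\<integral>\<^sup>+ x. ennreal (x\<^sup>2 * exp (l * x)) \<partial>(Mf f)) < \<infinity>"
    and data_ne: "xs \<noteq> []"
    and data_sorted: "sorted xs"
    and data_nonneg: "\<forall>x\<in>set xs. 0 \<le> x"
  shows "\<exists>C :: real \<Rightarrow> real \<Rightarrow> real. \<forall>\<epsilon> R s m.
     \<epsilon> > 0 \<and> s \<ge> 0 \<and> m < \<beta> \<and>
     (\<forall>\<phi>\<in>Theta. ereal R \<le> Lfun f xs \<phi> \<longrightarrow>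
         \<bar>\<phi> 0\<bar> \<le> s \<and> (\<forall>x\<ge>0. right_deriv \<phi> x \<le> m))
     \<longrightarrow>
     (\<forall>\<theta>\<in>Theta. \<forall>\<tau>\<ge>0.
        (\<exists>D. has_DL f xs \<theta> (V \<tau>) D \<and> D > ereal \<epsilon>) \<and> ereal R \<le> Lfun f xs \<theta>
        \<longrightarrow>
        (let g = (\<lambda>t. Lfun f xs (\<lambda>x. \<theta> x + t * V \<tau> x) - Lfun f xs \<theta>) in
         \<forall>t\<ge>0. g t \<ge> 0 \<longrightarrow>
           (\<exists>\<delta>>0. \<exists>g1 :: real \<Rightarrow> real. \<exists>g2 :: real.
              (\<forall>u\<ge>0. \<bar>u - t\<bar> < \<delta> \<longrightarrow>
                  g u \<noteq> -\<infinity> \<and>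
                  ((\<lambda>r. real_of_ereal (g r)) has_real_derivative g1 u) (at u within {0..})) \<and>
              (g1 has_real_derivative g2) (at t within {0..}) \<and>
              \<bar>g2\<bar> \<le> C s m)))"
proof -
  define M where "M = Mf f"
  have spM: "space M = {0..}" by (simp add: M_def Mf_def)
  have measB: "h \<in> borel_measurable M" if "h \<in> borel_measurable borel" for h :: "real \<Rightarrow> real"
    using that unfolding M_def Mf_def
    by (simp add: measurable_restrict_space1)
  have sM: "sets M = sets (restrict_space borel ({0..} :: real set))"
    unfolding M_def Mf_def sets_density by (rule sets_restrict_space_cong) (rule sets_lborel)
  have measR: "h \<in> borel_measurable M" if "h \<in> borel_measurable (restrict_space borel {0..})" for h :: "real \<Rightarrow> real"
    by (subst measurable_cong_sets[OF sM refl]) (rule that)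
  have exp_int: "integrable M (\<lambda>x. exp (l * x))" if "l < \<beta>" for l
  proof (rule integrableI_bounded)
    show "(\<lambda>x. exp (l * x)) \<in> borel_measurable M" by (intro measB) measurable
    show "(\<integral>\<^sup>+ x. ennreal (norm (exp (l * x))) \<partial>M) < \<infinity>"
      using A2_fin that unfolding M_def by simp
  qed
  have sq_int: "integrable M (\<lambda>x. x\<^sup>2 * exp (m * x))" if "m < \<beta>" for m
  proof (rule integrableI_bounded)
    show "(\<lambda>x. x\<^sup>2 * exp (m * x)) \<in> borel_measurable M" by (intro measB) measurable
    have "(\<integral>\<^sup>+ x. ennreal (x\<^sup>2 * exp (m * x)) \<partial>M) < \<infinity>"
      using A2_fin A3 that unfolding M_def by blast
    moreover have "(\<lambda>x. ennreal (norm (x\<^sup>2 * exp (m * x)))) = (\<lambda>x. ennreal (x\<^sup>2 * exp (m * x)))"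
      by (simp add: abs_mult)
    ultimately show "(\<integral>\<^sup>+ x. ennreal (norm (x\<^sup>2 * exp (m * x))) \<partial>M) < \<infinity>" by simp
  qed
  define C where "C = (\<lambda>s m. exp s * enn2real (\<integral>\<^sup>+ x. ennreal (x\<^sup>2 * exp (m * x)) \<partial>Mf f))"
  show ?thesis
  proof (intro exI[of _ C] allI impI)
    fix \<epsilon> R s m :: real
    assume H: "\<epsilon> > 0 \<and> s \<ge> 0 \<and> m < \<beta> \<and>
     (\<forall>\<phi>\<in>Theta. ereal R \<le> Lfun f xs \<phi> \<longrightarrow>
         \<bar>\<phi> 0\<bar> \<le> s \<and> (\<forall>x\<ge>0. right_deriv \<phi> x \<le> m))"
    then have m\<beta>: "m < \<beta>" and HH: "\<And>\<phi>. \<phi> \<in> Theta \<Longrightarrow> ereal R \<le> Lfun f xs \<phi> \<Longrightarrow>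
         \<bar>\<phi> 0\<bar> \<le> s \<and> (\<forall>x\<ge>0. right_deriv \<phi> x \<le> m)" by auto
    show "\<forall>\<theta>\<in>Theta. \<forall>\<tau>\<ge>0.
        (\<exists>D. has_DL f xs \<theta> (V \<tau>) D \<and> D > ereal \<epsilon>) \<and> ereal R \<le> Lfun f xs \<theta>
        \<longrightarrow>
        (let g = (\<lambda>t. Lfun f xs (\<lambda>x. \<theta> x + t * V \<tau> x) - Lfun f xs \<theta>) in
         \<forall>t\<ge>0. g t \<ge> 0 \<longrightarrow>
           (\<exists>\<delta>>0. \<exists>g1 :: real \<Rightarrow> real. \<exists>g2 :: real.
              (\<forall>u\<ge>0. \<bar>u - t\<bar> < \<delta> \<longrightarrow>
                  g u \<noteq> -\<infinity> \<and>
                  ((\<lambda>r. real_of_ereal (g r)) has_real_derivative g1 u) (at u within {0..})) \<and>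
              (g1 has_real_derivative g2) (at t within {0..}) \<and>
              \<bar>g2\<bar> \<le> C s m))"
    proof (intro ballI allI impI)
      fix \<theta> :: "real \<Rightarrow> real" and \<tau> :: real
      assume \<theta>: "\<theta> \<in> Theta" and \<tau>: "\<tau> \<ge> 0"
        and hyp: "(\<exists>D. has_DL f xs \<theta> (V \<tau>) D \<and> D > ereal \<epsilon>) \<and> ereal R \<le> Lfun f xs \<theta>"
      have LR: "ereal R \<le> Lfun f xs \<theta>" using hyp by blast
      have \<theta>cv: "convex_on {0..} \<theta>" and \<theta>mono: "mono_on {0..} \<theta>" using \<theta> by (auto simp: Theta_def)
      have \<theta>meas: "\<theta> \<in> borel_measurable M"
        by (rule measR) (rule borel_measurable_mono_on_fnc[OF \<theta>mono])
      have Vmeas: "V \<tau> \<in> borel_measurable M"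
        by (intro measB) (simp add: V_def[abs_def])
      show "let g = (\<lambda>t. Lfun f xs (\<lambda>x. \<theta> x + t * V \<tau> x) - Lfun f xs \<theta>) in
         \<forall>t\<ge>0. g t \<ge> 0 \<longrightarrow>
           (\<exists>\<delta>>0. \<exists>g1 :: real \<Rightarrow> real. \<exists>g2 :: real.
              (\<forall>u\<ge>0. \<bar>u - t\<bar> < \<delta> \<longrightarrow>
                  g u \<noteq> -\<infinity> \<and>
                  ((\<lambda>r. real_of_ereal (g r)) has_real_derivative g1 u) (at u within {0..})) \<and>
              (g1 has_real_derivative g2) (at t within {0..}) \<and>
              \<bar>g2\<bar> \<le> C s m)"
        unfolding Let_def
      proof (intro allI impI)
        fix t :: real assume t0: "t \<ge> 0"
          and gt: "Lfun f xs (\<lambda>x. \<theta> x + t * V \<tau> x) - Lfun f xs \<theta> \<ge> 0"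
        show "\<exists>\<delta>>0. \<exists>g1 :: real \<Rightarrow> real. \<exists>g2 :: real.
              (\<forall>u\<ge>0. \<bar>u - t\<bar> < \<delta> \<longrightarrow>
                  Lfun f xs (\<lambda>x. \<theta> x + u * V \<tau> x) - Lfun f xs \<theta> \<noteq> -\<infinity> \<and>
                  ((\<lambda>r. real_of_ereal (Lfun f xs (\<lambda>x. \<theta> x + r * V \<tau> x) - Lfun f xs \<theta>))
                     has_real_derivative g1 u) (at u within {0..})) \<and>
              (g1 has_real_derivative g2) (at t within {0..}) \<and>
              \<bar>g2\<bar> \<le> C s m"
        proof -
          define \<phi> where "\<phi> = (\<lambda>x. \<theta> x + t * V \<tau> x)"
          have \<phi>Th: "\<phi> \<in> Theta"
          proof -
            have "convex_on {0..} \<phi>" unfolding \<phi>_def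
              using \<theta>cv V_convex[of \<tau>] t0 by (intro convex_on_add convex_on_cmul) auto
            moreover have "mono_on {0..} \<phi>" unfolding \<phi>_def
              using \<theta>mono V_mono[of \<tau>] t0
              by (auto simp: mono_on_def intro!: add_mono mult_left_mono)
            ultimately show ?thesis by (simp add: Theta_def)
          qed
          obtain Lr where Lr: "Lfun f xs \<theta> = ereal Lr"
            using LR Lfun_not_PInf[of f xs \<theta>] by (cases "Lfun f xs \<theta>") auto
          have "Lfun f xs \<theta> \<le> Lfun f xs \<phi>"
            using gt unfolding Lr \<phi>_def by (cases "Lfun f xs (\<lambda>x. \<theta> x + t * V \<tau> x)") auto
          then have "ereal R \<le> Lfun f xs \<phi>" using LR by (rule order_trans[rotated])
          from HH[OF \<phi>Th this] have s0: "\<bar>\<phi> 0\<bar> \<le> s" and rdm: "\<And>x. x \<ge> 0 \<Longrightarrow> right_deriv \<phi> x \<le> m"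
            by auto
          have \<phi>0: "\<phi> 0 = \<theta> 0" unfolding \<phi>_def using V_zero[OF \<tau>] by simp
          have \<phi>cv: "convex_on {0..} \<phi>" using \<phi>Th by (simp add: Theta_def)
          have bound: "\<theta> y + t * V \<tau> y \<le> s + m * y" if y: "y \<ge> 0" for y
          proof (cases "y = 0")
            case True
            then show ?thesis using s0 \<phi>0 V_zero[OF \<tau>] by simp
          next
            case False
            then have yp: "y > 0" using y by simp
            have "(\<phi> y - \<phi> 0) / y \<le> m"
              using chord_le_right_deriv[OF \<phi>cv yp] rdm[OF y] by linarith
            then have "\<phi> y - \<phi> 0 \<le> m * y" using yp by (simp add: pos_divide_le_eq)
            moreover have "\<phi> y = \<theta> y + t * V \<tau> y" by (simp add: \<phi>_def)
            moreover have "\<phi> 0 \<le> s" using s0 by (simp add: abs_le_iff)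
            ultimately show ?thesis by linarith
          qed
          define \<delta>0 where "\<delta>0 = (\<beta> - m) / 5"
          have \<delta>0: "\<delta>0 > 0" using m\<beta> by (simp add: \<delta>0_def)
          define a where "a = m + 3 * \<delta>0"
          have a\<beta>: "a < \<beta>" "a + \<delta>0 < \<beta>" using m\<beta> by (simp_all add: a_def \<delta>0_def field_simps)
          have bound2: "\<theta> y + r * V \<tau> y \<le> s + a * y" if y: "y \<ge> 0" and r: "r < t + 3 * \<delta>0" for y r
          proof -
            have Vy: "0 \<le> V \<tau> y" "V \<tau> y \<le> y" using V_nonneg V_le[OF \<tau> y] by auto
            have "r * V \<tau> y \<le> t * V \<tau> y + 3 * \<delta>0 * y"
            proof (cases "r \<le> t")
              case True
              then have "r * V \<tau> y \<le> t * V \<tau> y" using Vy by (intro mult_right_mono) auto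
              moreover have "0 \<le> 3 * \<delta>0 * y" using \<delta>0 y by simp
              ultimately show ?thesis by linarith
            next
              case False
              have "(r - t) * V \<tau> y \<le> (3 * \<delta>0) * y"
                using False r Vy \<delta>0 by (intro mult_mono) auto
              then show ?thesis by (simp add: algebra_simps)
            qed
            then show ?thesis using bound[OF y] unfolding a_def by (simp add: algebra_simps)
          qed
          have cube: "y ^ 3 \<le> (3 / \<delta>0) ^ 3 * exp (\<delta>0 * y)" if y: "y \<ge> 0" for y
          proof -
            have "\<delta>0 * y / 3 \<le> exp (\<delta>0 * y / 3)"
              using exp_ge_add_one_self[of "\<delta>0 * y / 3"] by linarith
            then have "y \<le> (3 / \<delta>0) * exp (\<delta>0 * y / 3)" using \<delta>0 by (simp add: field_simps)
            then have "y ^ 3 \<le> ((3 / \<delta>0) * exp (\<delta>0 * y / 3)) ^ 3" using y by (intro power_mono) auto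
            also have "\<dots> = (3 / \<delta>0) ^ 3 * exp (\<delta>0 * y / 3) ^ 3" by (rule power_mult_distrib)
            also have "exp (\<delta>0 * y / 3) ^ 3 = exp (\<delta>0 * y)"
              using exp_of_nat_mult[of 3 "\<delta>0 * y / 3"] by simp
            finally show ?thesis .
          qed
          have powk: "V \<tau> y ^ k \<le> 1 + y ^ 3" if y: "y \<ge> 0" and k: "k \<le> 3" for y k
          proof -
            have "V \<tau> y ^ k \<le> y ^ k" using V_nonneg V_le[OF \<tau> y] by (intro power_mono) auto
            also have "y ^ k \<le> 1 + y ^ 3"
            proof (cases "y \<le> 1")
              case True
              then have "y ^ k \<le> 1" using y by (intro power_le_one) auto
              then show ?thesis using y by (smt (verit) zero_le_power)
            next
              case False
              then have "y ^ k \<le> y ^ 3" using k by (intro power_increasing) auto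
              then show ?thesis by simp
            qed
            finally show ?thesis .
          qed
          have IK: "integrable M (\<lambda>y. exp (\<theta> y) * V \<tau> y ^ k * exp (r * V \<tau> y))"
            if k: "k \<le> 3" and r: "r < t + 3 * \<delta>0" for k r
          proof (rule Bochner_Integration.integrable_bound)
            show "integrable M (\<lambda>y. exp s * (exp (a * y) + (3 / \<delta>0) ^ 3 * exp ((a + \<delta>0) * y)))"
              using exp_int a\<beta> by (intro Bochner_Integration.integrable_mult_right Bochner_Integration.integrable_add) auto
            show "(\<lambda>y. exp (\<theta> y) * V \<tau> y ^ k * exp (r * V \<tau> y)) \<in> borel_measurable M"
              using \<theta>meas Vmeas by measurable
            show "AE y in M. norm (exp (\<theta> y) * V \<tau> y ^ k * exp (r * V \<tau> y))
                \<le> norm (exp s * (exp (a * y) + (3 / \<delta>0) ^ 3 * exp ((a + \<delta>0) * y)))"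
            proof (rule AE_I2)
              fix y assume "y \<in> space M"
              then have y: "y \<ge> 0" using spM by auto
              have nn: "0 \<le> exp (\<theta> y) * V \<tau> y ^ k * exp (r * V \<tau> y)" using V_nonneg by simp
              have "exp (\<theta> y) * V \<tau> y ^ k * exp (r * V \<tau> y) = V \<tau> y ^ k * exp (\<theta> y + r * V \<tau> y)"
                by (simp add: exp_add)
              also have "\<dots> \<le> (1 + (3 / \<delta>0) ^ 3 * exp (\<delta>0 * y)) * exp (s + a * y)"
              proof (rule mult_mono)
                show "V \<tau> y ^ k \<le> 1 + (3 / \<delta>0) ^ 3 * exp (\<delta>0 * y)" using powk[OF y k] cube[OF y] by linarith
                show "exp (\<theta> y + r * V \<tau> y) \<le> exp (s + a * y)" using bound2[OF y r] by simp
              qed (use \<delta>0 in auto)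
              also have "\<dots> = exp s * (exp (a * y) + (3 / \<delta>0) ^ 3 * exp ((a + \<delta>0) * y))"
                by (simp add: exp_add distrib_right algebra_simps)
              finally show "norm (exp (\<theta> y) * V \<tau> y ^ k * exp (r * V \<tau> y))
                \<le> norm (exp s * (exp (a * y) + (3 / \<delta>0) ^ 3 * exp ((a + \<delta>0) * y)))"
                using nn by simp
            qed
          qed
          have IKc: "integrable M h" if k: "k \<le> 3" and r: "r < t + 3 * \<delta>0"
            and eq: "\<And>y. y \<ge> 0 \<Longrightarrow> h y = exp (\<theta> y) * V \<tau> y ^ k * exp (r * V \<tau> y)" for h k r
          proof -
            have "integrable M h \<longleftrightarrow> integrable M (\<lambda>y. exp (\<theta> y) * V \<tau> y ^ k * exp (r * V \<tau> y))"
              by (rule Bochner_Integration.integrable_cong) (auto simp: spM eq)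
            then show ?thesis using IK[OF k r] by simp
          qed
          define A where "A = sum_list (map (V \<tau>) xs) / real (length xs)"
          define S\<theta> where "S\<theta> = sum_list (map \<theta> xs) / real (length xs)"
          define J where "J = (\<lambda>r. \<integral>y. exp (\<theta> y) * exp (r * V \<tau> y) \<partial>M)"
          define J1 where "J1 = (\<lambda>r. \<integral>y. exp (\<theta> y) * V \<tau> y * exp (r * V \<tau> y) \<partial>M)"
          define J2 where "J2 = (\<integral>y. exp (\<theta> y) * V \<tau> y * V \<tau> y * exp (t * V \<tau> y) \<partial>M)"
          have LE: "Lfun f xs (\<lambda>x. \<theta> x + r * V \<tau> x) = ereal (S\<theta> + r * A - J r + 1)"
            if r: "r < t + 3 * \<delta>0" for r
          proof -
            have iJ: "integrable M (\<lambda>y. exp (\<theta> y) * exp (r * V \<tau> y))"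
              by (rule IKc[of 0 r]) (simp_all add: r)
            have "(\<integral>\<^sup>+x. ennreal (exp (\<theta> x + r * V \<tau> x)) \<partial>Mf f)
                = (\<integral>\<^sup>+x. ennreal (exp (\<theta> x) * exp (r * V \<tau> x)) \<partial>M)"
              by (simp add: M_def exp_add)
            also have "\<dots> = ennreal (J r)" unfolding J_def
              by (rule nn_integral_eq_integral[OF iJ]) simp
            finally have nn: "(\<integral>\<^sup>+x. ennreal (exp (\<theta> x + r * V \<tau> x)) \<partial>Mf f) = ennreal (J r)" .
            have J0: "0 \<le> J r" unfolding J_def by (rule Bochner_Integration.integral_nonneg) simp
            have sm: "sum_list (map (\<lambda>x. \<theta> x + r * V \<tau> x) xs) / real (length xs) = S\<theta> + r * A"
              unfolding A_def S\<theta>_def by (simp add: sum_list_addf sum_list_const_mult add_divide_distrib)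
            show ?thesis unfolding Lfun_def nn sm using J0 by simp
          qed
          have z: "0 < t + 3 * \<delta>0" using t0 \<delta>0 by simp
          have Lth: "Lfun f xs \<theta> = ereal (S\<theta> - J 0 + 1)"
          proof -
            have "(\<lambda>x. \<theta> x + 0 * V \<tau> x) = \<theta>" by simp
            then show ?thesis using LE[OF z] by simp
          qed
          have gE: "Lfun f xs (\<lambda>x. \<theta> x + r * V \<tau> x) - Lfun f xs \<theta> = ereal (r * A - J r + J 0)"
            if r: "r < t + 3 * \<delta>0" for r
            unfolding LE[OF r] Lth by (simp add: algebra_simps)
          have dJ: "(J has_real_derivative J1 u) (at u)" if u: "u < t + 3 * \<delta>0" for u
            unfolding J_def J1_def
          proof (rule deriv_exp_integral[where c="u - 1" and d="t + 3 * \<delta>0" and v="V \<tau>" and w="\<lambda>x. exp (\<theta> x)"])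
            show "u - 1 < u" by simp
            show "u < t + 3 * \<delta>0" by fact
            show "0 \<le> V \<tau> x" for x by (rule V_nonneg)
            show "integrable M (\<lambda>x. exp (\<theta> x) * exp (r * V \<tau> x))" if "u - 1 < r" "r < t + 3 * \<delta>0" for r
              by (rule IKc[of 0 r]) (use that in simp_all)
            show "integrable M (\<lambda>x. exp (\<theta> x) * V \<tau> x * exp (r * V \<tau> x))" if "u - 1 < r" "r < t + 3 * \<delta>0" for r
              by (rule IKc[of 1 r]) (use that in simp_all)
            show "integrable M (\<lambda>x. \<bar>exp (\<theta> x)\<bar> * (V \<tau> x)\<^sup>2 * exp (r * V \<tau> x))" if "u - 1 < r" "r < t + 3 * \<delta>0" for r
              by (rule IKc[of 2 r]) (use that in simp_all)
          qed
          have dJ1: "(J1 has_real_derivative J2) (at t)"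
            unfolding J1_def J2_def
          proof (rule deriv_exp_integral[where c="t - 1" and d="t + 3 * \<delta>0" and v="V \<tau>" and w="\<lambda>x. exp (\<theta> x) * V \<tau> x"])
            show "t - 1 < t" by simp
            show "t < t + 3 * \<delta>0" using \<delta>0 by simp
            show "0 \<le> V \<tau> x" for x by (rule V_nonneg)
            show "integrable M (\<lambda>x. exp (\<theta> x) * V \<tau> x * exp (r * V \<tau> x))" if "t - 1 < r" "r < t + 3 * \<delta>0" for r
              by (rule IKc[of 1 r]) (use that in simp_all)
            show "integrable M (\<lambda>x. exp (\<theta> x) * V \<tau> x * V \<tau> x * exp (r * V \<tau> x))" if "t - 1 < r" "r < t + 3 * \<delta>0" for r
              by (rule IKc[of 2 r]) (use that in \<open>simp_all add: power2_eq_square\<close>)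
            show "integrable M (\<lambda>x. \<bar>exp (\<theta> x) * V \<tau> x\<bar> * (V \<tau> x)\<^sup>2 * exp (r * V \<tau> x))" if "t - 1 < r" "r < t + 3 * \<delta>0" for r
            proof (rule IKc[of 3 r])
              show "r < t + 3 * \<delta>0" by fact
              fix y :: real
              have "\<bar>exp (\<theta> y) * V \<tau> y\<bar> = exp (\<theta> y) * V \<tau> y"
                using V_nonneg[of \<tau> y] by (simp add: abs_mult)
              then show "\<bar>exp (\<theta> y) * V \<tau> y\<bar> * (V \<tau> y)\<^sup>2 * exp (r * V \<tau> y) = exp (\<theta> y) * V \<tau> y ^ 3 * exp (r * V \<tau> y)"
                by (simp add: power2_eq_square power3_eq_cube mult_ac)
            qed simp
          qed
          have part1: "\<forall>u\<ge>0. \<bar>u - t\<bar> < \<delta>0 \<longrightarrow>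
                  Lfun f xs (\<lambda>x. \<theta> x + u * V \<tau> x) - Lfun f xs \<theta> \<noteq> -\<infinity> \<and>
                  ((\<lambda>r. real_of_ereal (Lfun f xs (\<lambda>x. \<theta> x + r * V \<tau> x) - Lfun f xs \<theta>))
                     has_real_derivative (A - J1 u)) (at u within {0..})"
          proof (intro allI impI conjI)
            fix u :: real assume u0: "u \<ge> 0" and ut: "\<bar>u - t\<bar> < \<delta>0"
            have ur: "u < t + 3 * \<delta>0" using ut \<delta>0 by (simp add: abs_less_iff)
            show "Lfun f xs (\<lambda>x. \<theta> x + u * V \<tau> x) - Lfun f xs \<theta> \<noteq> -\<infinity>" using gE[OF ur] by simp
            have d1: "((\<lambda>r. r * A - J r + J 0) has_real_derivative (A - J1 u)) (at u)"
            proof -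
              have "((\<lambda>r. r * A - J r + J 0) has_real_derivative (1 * A - J1 u + 0)) (at u)"
                by (intro DERIV_add DERIV_diff DERIV_cmult_right[OF DERIV_ident] dJ[OF ur] DERIV_const)
              then show ?thesis by simp
            qed
            have d2: "((\<lambda>r. real_of_ereal (Lfun f xs (\<lambda>x. \<theta> x + r * V \<tau> x) - Lfun f xs \<theta>))
                     has_real_derivative (A - J1 u)) (at u)"
              by (rule has_field_derivative_transform_within_open[OF d1, of "{..<t + 3 * \<delta>0}"])
                (auto simp: gE ur)
            show "((\<lambda>r. real_of_ereal (Lfun f xs (\<lambda>x. \<theta> x + r * V \<tau> x) - Lfun f xs \<theta>))
                     has_real_derivative (A - J1 u)) (at u within {0..})"
              using d2 by (rule has_field_derivative_at_within)
          qed
          have part2: "((\<lambda>u. A - J1 u) has_real_derivative (- J2)) (at t within {0..})"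
          proof -
            have "((\<lambda>u. A - J1 u) has_real_derivative (0 - J2)) (at t)"
              by (intro derivative_intros dJ1)
            then show ?thesis by (simp add: has_field_derivative_at_within)
          qed
          have part3: "\<bar>- J2\<bar> \<le> C s m"
          proof -
            have iJ2: "integrable M (\<lambda>y. exp (\<theta> y) * V \<tau> y * V \<tau> y * exp (t * V \<tau> y))"
              by (rule IKc[of 2 t]) (use \<delta>0 in \<open>simp_all add: power2_eq_square\<close>)
            have J2nn: "0 \<le> J2" unfolding J2_def
              by (rule Bochner_Integration.integral_nonneg) (simp add: V_nonneg)
            have "J2 \<le> (\<integral>y. exp s * (y\<^sup>2 * exp (m * y)) \<partial>M)"
              unfolding J2_def
            proof (rule integral_mono[OF iJ2])
              show "integrable M (\<lambda>y. exp s * (y\<^sup>2 * exp (m * y)))"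
                using sq_int[OF m\<beta>] by simp
              fix y assume "y \<in> space M"
              then have y: "y \<ge> 0" using spM by auto
              have "exp (\<theta> y) * V \<tau> y * V \<tau> y * exp (t * V \<tau> y) = (V \<tau> y)\<^sup>2 * exp (\<theta> y + t * V \<tau> y)"
                by (simp add: exp_add power2_eq_square)
              also have "\<dots> \<le> y\<^sup>2 * exp (s + m * y)"
              proof (rule mult_mono)
                show "(V \<tau> y)\<^sup>2 \<le> y\<^sup>2" using V_nonneg V_le[OF \<tau> y] by (intro power_mono) auto
                show "exp (\<theta> y + t * V \<tau> y) \<le> exp (s + m * y)" using bound[OF y] by simp
              qed auto
              also have "\<dots> = exp s * (y\<^sup>2 * exp (m * y))" by (simp add: exp_add)
              finally show "exp (\<theta> y) * V \<tau> y * V \<tau> y * exp (t * V \<tau> y) \<le> exp s * (y\<^sup>2 * exp (m * y))" .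
            qed
            also have "\<dots> = exp s * (\<integral>y. y\<^sup>2 * exp (m * y) \<partial>M)" by simp
            also have "(\<integral>y. y\<^sup>2 * exp (m * y) \<partial>M) = enn2real (\<integral>\<^sup>+ x. ennreal (x\<^sup>2 * exp (m * x)) \<partial>Mf f)"
            proof -
              have "(\<integral>\<^sup>+ x. ennreal (x\<^sup>2 * exp (m * x)) \<partial>M) = ennreal (\<integral>y. y\<^sup>2 * exp (m * y) \<partial>M)"
                by (rule nn_integral_eq_integral[OF sq_int[OF m\<beta>]]) simp
              moreover have "0 \<le> (\<integral>y. y\<^sup>2 * exp (m * y) \<partial>M)"
                by (rule Bochner_Integration.integral_nonneg) simp
              ultimately show ?thesis unfolding M_def by simp
            qed
            finally have "J2 \<le> C s m" unfolding C_def .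
            then show ?thesis using J2nn by simp
          qed
          show ?thesis
            apply (rule exI[where x=\<delta>0])
            apply (rule conjI[OF \<delta>0])
            apply (rule exI[where x="\<lambda>u. A - J1 u"])
            apply (rule exI[where x="- J2"])
            apply (rule conjI[OF part1])
            apply (rule conjI[OF part2 part3])
            done
        qed
      qed
    qed
  qed
qed

end
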